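(* Let $y_0\in E$ and let $u$ be a positive solution of $0=\tfrac12b^2u''+\tilde au'+\eta u-u^2-d\frac{(u')^2}{u}$ on $[y_0,\infty)$ with $u(y)/\eta(y)\to1$ as $y\to\infty$. Assume that on $[y_0,\infty)$ we have $\eta\in C^2$, $\eta>0$, $\Psi\eta\le1$ and $\bar a:=\frac{\tilde a}{\eta}+(b^2-2d)\frac{\eta'}{\eta^2}\le0$. Then either $u>\eta$ for all sufficiently large $y$, or $u\le\eta$ for all sufficiently large $y$. If in addition $\frac{\tilde a}{b^2}\le-C$ on $[y_0,\infty)$ for some constant $C>0$, $\eta(y)\to\infty$ and $\eta(y)e^{-2Cy}\to0$ as $y\to\infty$, then $u\le\eta$ for all sufficiently large $y$.
   Context: $E=(E_-,\infty)$ with $E_-\in\{-\infty\}\cup\mathbb R$. $r,\lambda,\sigma,a,b,\rho,\delta:E\to\mathbb R$ are locally Lipschitz with $\sigma>0$, $b(y)\neq0$, $\rho(y)\in[-1,1]$; $R\in(0,\infty)\setminus\{1\}$. Define $\eta=\frac1R\big(\delta-(1-R)(r+\frac{\lambda^2}{2R})\big)$, $\tilde a=a+\frac{1-R}{R}\rho\lambda b$, $d=\frac12b^2((1-\rho^2)R+\rho^2+1)$, and for positive $g\in C^2$, $\Psi g=1+\frac{\frac12b^2g''+\tilde ag'}{g^2}-d\frac{(g')^2}{g^3}$. *)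

theory Defs
  imports "HOL-Analysis.Analysis"
begin

definition stateE :: "ereal \<Rightarrow> real set" where
  "stateE Em = {y. Em < ereal y}"

definition loc_lipschitz_on :: "real set \<Rightarrow> (real \<Rightarrow> real) \<Rightarrow> bool" where
  "loc_lipschitz_on S f \<longleftrightarrow>
     (\<forall>x\<in>S. \<exists>e>0. \<exists>L. \<forall>y\<in>ball x e \<inter> S. \<forall>z\<in>ball x e \<inter> S. \<bar>f y - f z\<bar> \<le> L * \<bar>y - z\<bar>)"

definition eta_fun ::
  "real \<Rightarrow> (real \<Rightarrow> real) \<Rightarrow> (real \<Rightarrow> real) \<Rightarrow> (real \<Rightarrow> real) \<Rightarrow> real \<Rightarrow> real" where
  "eta_fun R r lam del y = (1 / R) * (del y - (1 - R) * (r y + (lam y)\<^sup>2 / (2 * R)))"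

definition atilde_fun ::
  "real \<Rightarrow> (real \<Rightarrow> real) \<Rightarrow> (real \<Rightarrow> real) \<Rightarrow> (real \<Rightarrow> real) \<Rightarrow> (real \<Rightarrow> real) \<Rightarrow> real \<Rightarrow> real" where
  "atilde_fun R a rho lam b y = a y + ((1 - R) / R) * rho y * lam y * b y"

definition d_fun :: "real \<Rightarrow> (real \<Rightarrow> real) \<Rightarrow> (real \<Rightarrow> real) \<Rightarrow> real \<Rightarrow> real" where
  "d_fun R b rho y = (1/2) * (b y)\<^sup>2 * ((1 - (rho y)\<^sup>2) * R + (rho y)\<^sup>2 + 1)"

text \<open>Psi g = 1 + (b^2 g''/2 + atilde g')/g^2 - d (g')^2/g^3, with g' = g1 and g'' = g2
  supplied explicitly as the first and second derivatives of g.\<close>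
definition Psi_op ::
  "(real \<Rightarrow> real) \<Rightarrow> (real \<Rightarrow> real) \<Rightarrow> (real \<Rightarrow> real) \<Rightarrow> (real \<Rightarrow> real) \<Rightarrow> (real \<Rightarrow> real)
    \<Rightarrow> (real \<Rightarrow> real) \<Rightarrow> real \<Rightarrow> real" where
  "Psi_op b ta d g g1 g2 y =
     1 + ((1/2) * (b y)\<^sup>2 * g2 y + ta y * g1 y) / (g y)\<^sup>2 - d y * (g1 y)\<^sup>2 / (g y) ^ 3"

end

theory Submission
  imports Defs "HOL-Real_Asymp.Real_Asymp"
begin


lemma alg1:
  fixes x e e1 e2 x1 x2 B t D :: real
  assumes xe: "x > e" and e: "e > 0" and B: "B > 0"
    and ode: "0 = (1/2)*B*x2 + t*x1 + e*x - x^2 - D*x1^2/x"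
    and psi: "1 + ((1/2)*B*e2 + t*e1)/e^2 - D*e1^2/e^3 \<le> 1"
    and N: "x1*e - x*e1 = 0"
  shows "x2*e - x*e2 > 0"
proof -
  have x: "x > 0" using xe e by linarith
  have x1: "x1 = x*e1/e" using N e by (simp add: field_simps)
  have P0: "((1/2)*B*e2 + t*e1)/e^2 - D*e1^2/e^3 \<le> 0" using psi by linarith
  have "(((1/2)*B*e2 + t*e1)/e^2 - D*e1^2/e^3) * e^2 = (1/2)*B*e2 + t*e1 - D*e1^2/e"
    using e by (simp add: field_simps power2_eq_square power3_eq_cube)
  moreover have "(((1/2)*B*e2 + t*e1)/e^2 - D*e1^2/e^3) * e^2 \<le> 0"
    using P0 e by (simp add: mult_nonpos_nonneg)
  ultimately have P: "(1/2)*B*e2 + t*e1 - D*e1^2/e \<le> 0" by simp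
  have O: "0 = (1/2)*B*x2*e + t*x*e1 + e^2*x - x^2*e - D*x*e1^2/e"
  proof -
    have "0 = ((1/2)*B*x2 + t*x1 + e*x - x^2 - D*x1^2/x) * e" using ode by simp
    also have "\<dots> = (1/2)*B*x2*e + t*x*e1 + e^2*x - x^2*e - D*x*e1^2/e"
      unfolding x1 using e x by (simp add: field_simps power2_eq_square)
    finally show ?thesis .
  qed
  have Q: "x * ((1/2)*B*e2 + t*e1 - D*e1^2/e) \<le> 0" using P x by (simp add: mult_nonneg_nonpos)
  have "(1/2)*B*(x2*e - x*e2) = x*e*(x-e) - x * ((1/2)*B*e2 + t*e1 - D*e1^2/e)"
    using O by (simp add: algebra_simps power2_eq_square)
  moreover have "x*e*(x-e) > 0" using x e xe by simp
  ultimately have "(1/2)*B*(x2*e - x*e2) > 0" using Q by linarith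
  thus ?thesis using B by (simp add: zero_less_mult_iff)
qed


lemma alg2:
  fixes x e x1 x2 B t D C :: real
  assumes xe: "x > e" and e: "e > 0" and B: "B > 0" and D: "D \<ge> 0" and x1: "x1 \<ge> 0"
    and tC: "t / B \<le> - C"
    and ode: "0 = (1/2)*B*x2 + t*x1 + e*x - x^2 - D*x1^2/x"
  shows "x2 > 2*C*x1"
proof -
  have x: "x > 0" using xe e by linarith
  have t: "t \<le> - C * B" using tC B by (simp add: divide_le_eq)
  have "-t * x1 \<ge> C * B * x1" using t x1 by (intro mult_right_mono) auto
  moreover have "D*x1^2/x \<ge> 0" using D x by simp
  moreover have "x^2 - e*x > 0" using x xe by (simp add: power2_eq_square algebra_simps)
  ultimately have "(1/2)*B*x2 > C * B * x1" using ode by linarith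
  hence "B * (x2 - 2*C*x1) > 0" by (simp add: algebra_simps)
  thus ?thesis using B by (simp add: zero_less_mult_iff)
qed

lemma deriv_at:
  assumes "(f has_real_derivative D) (at y within {y0..})" "y0 < (y::real)"
  shows "(f has_real_derivative D) (at y)"
proof -
  have "at y within {y0..} = at y" using assms(2) by (intro at_within_interior) simp
  thus ?thesis using assms(1) by simp
qed


lemma part1:
  fixes u u1 u2 eta eta1 eta2 :: "real \<Rightarrow> real" and y0 :: real
  assumes du: "\<And>y. y > y0 \<Longrightarrow> (u has_real_derivative u1 y) (at y)"
    and du1: "\<And>y. y > y0 \<Longrightarrow> (u1 has_real_derivative u2 y) (at y)"
    and de: "\<And>y. y > y0 \<Longrightarrow> (eta has_real_derivative eta1 y) (at y)"
    and de1: "\<And>y. y > y0 \<Longrightarrow> (eta1 has_real_derivative eta2 y) (at y)"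
    and epos: "\<And>y. y > y0 \<Longrightarrow> eta y > 0"
    and key: "\<And>y. y > y0 \<Longrightarrow> u y > eta y \<Longrightarrow> u1 y * eta y - u y * eta1 y = 0
                 \<Longrightarrow> u2 y * eta y - u y * eta2 y > 0"
  shows "(\<forall>\<^sub>F y in at_top. u y > eta y) \<or> (\<forall>\<^sub>F y in at_top. u y \<le> eta y)"
proof (rule ccontr)
  define w where "w = (\<lambda>y. u y / eta y)"
  define N where "N = (\<lambda>y. u1 y * eta y - u y * eta1 y)"
  have dw: "(w has_real_derivative N y / (eta y)^2) (at y)" if "y > y0" for y
    unfolding w_def N_def
    by (rule derivative_eq_intros du de that | use epos[OF that] in \<open>simp add: power2_eq_square\<close>)+
  have dN: "(N has_real_derivative u2 y * eta y - u y * eta2 y) (at y)" if "y > y0" for y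
    unfolding N_def
    by (rule derivative_eq_intros du de du1 de1 that refl | simp add: algebra_simps)+
  have wgt: "w y > 1 \<longleftrightarrow> u y > eta y" if "y > y0" for y
    using epos[OF that] by (simp add: w_def)
  assume "\<not> ?thesis"
  hence A: "\<And>M. \<exists>y\<ge>M. \<not> u y > eta y" and B: "\<And>M. \<exists>y\<ge>M. \<not> u y \<le> eta y"
    by (auto simp: eventually_at_top_linorder)
  obtain y1 where y1: "y1 \<ge> y0 + 1" "\<not> u y1 > eta y1" using A by blast
  obtain y2 where y2: "y2 \<ge> y1 + 1" "\<not> u y2 \<le> eta y2" using B by blast
  obtain y3 where y3: "y3 \<ge> y2 + 1" "\<not> u y3 > eta y3" using A by blast
  have "continuous_on {y1..y3} w"
    using y1 y2 y3 by (intro continuous_at_imp_continuous_on ballI DERIV_isCont[OF dw]) auto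
  then obtain s where s: "s \<in> {y1..y3}" "\<And>t. t \<in> {y1..y3} \<Longrightarrow> w t \<le> w s"
    using continuous_attains_sup[of "{y1..y3}" w] y1 y2 y3 by fastforce
  have w2: "w y2 > 1" using wgt[of y2] y1 y2 by auto
  have w1: "w y1 \<le> 1" using wgt[of y1] y1 by auto
  have w3: "w y3 \<le> 1" using wgt[of y3] y1 y2 y3 by auto
  have ws: "w s > 1" using s(2)[of y2] y1 y2 y3 w2 by auto
  have sne: "s \<noteq> y1" "s \<noteq> y3" using ws w1 w3 by auto
  hence sI: "y1 < s" "s < y3" using s(1) by auto
  have sy0: "s > y0" using sI y1 by linarith
  have "N s / (eta s)^2 = 0"
  proof (rule DERIV_local_max[OF dw[OF sy0], of "min (s - y1) (y3 - s)"])
    show "0 < min (s - y1) (y3 - s)" using sI by simp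
    show "\<forall>y. \<bar>s - y\<bar> < min (s - y1) (y3 - s) \<longrightarrow> w y \<le> w s"
      using s(2) by (auto simp: abs_if split: if_splits)
  qed
  hence N0: "N s = 0" using epos[OF sy0] by simp
  have pos: "u2 s * eta s - u s * eta2 s > 0"
    using key[OF sy0 _ N0[unfolded N_def]] wgt[OF sy0] ws by auto
  obtain dd where dd: "dd > 0" "\<And>h. h > 0 \<Longrightarrow> h < dd \<Longrightarrow> N s < N (s + h)"
    using DERIV_pos_inc_right[OF dN[OF sy0] pos] by blast
  define h where "h = min (dd/2) ((y3 - s)/2)"
  have hle: "h \<le> (y3 - s)/2" "h \<le> dd/2" unfolding h_def by linarith+
  have h: "h > 0" "h < dd" "s + h < y3" using dd sI hle by (auto simp: h_def)
  obtain z where z: "s < z" "z < s + h" "w (s + h) - w s = (s + h - s) * (N z / (eta z)^2)"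
    using MVT2[of s "s+h" w "\<lambda>y. N y / (eta y)^2"] h sy0 dw by force
  have "N z > 0" using dd(2)[of "z - s"] z h N0 by auto
  hence "N z / (eta z)^2 > 0" using epos[of z] z sy0 by simp
  hence "h * (N z / (eta z)^2) > 0" using h by (intro mult_pos_pos)
  hence "w (s + h) > w s" using z(3) by simp
  moreover have "w (s + h) \<le> w s" using s(2)[of "s+h"] h sI by auto
  ultimately show False by simp
qed



lemma part2:
  fixes u u1 u2 eta :: "real \<Rightarrow> real" and y0 C :: real
  assumes du: "\<And>y. y > y0 \<Longrightarrow> (u has_real_derivative u1 y) (at y)"
    and du1: "\<And>y. y > y0 \<Longrightarrow> (u1 has_real_derivative u2 y) (at y)"
    and C: "C > 0"
    and key2: "\<And>y. y > y0 \<Longrightarrow> u y > eta y \<Longrightarrow> u1 y \<ge> 0 \<Longrightarrow> u2 y > 2*C*u1 y"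
    and ev: "\<forall>\<^sub>F y in at_top. u y > eta y"
    and lim_eta: "filterlim eta at_top at_top"
    and ulim: "((\<lambda>y. u y / eta y) \<longlongrightarrow> 1) at_top"
    and eexp: "((\<lambda>y. eta y * exp (- 2 * C * y)) \<longlongrightarrow> 0) at_top"
    and epos: "\<And>y. y > y0 \<Longrightarrow> eta y > 0"
  shows False
proof -
  obtain M where M: "\<And>y. y \<ge> M \<Longrightarrow> u y > eta y" using ev by (auto simp: eventually_at_top_linorder)
  define Y0 where "Y0 = max M (y0 + 1)"
  have Y0: "Y0 > y0" "\<And>y. y \<ge> Y0 \<Longrightarrow> u y > eta y" using M by (auto simp: Y0_def)
  have ulimtop: "filterlim u at_top at_top"
    by (rule filterlim_at_top_mono[OF lim_eta]) (use Y0 in \<open>auto simp: eventually_at_top_linorder intro!: exI[of _ Y0] less_imp_le\<close>)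
  have "\<exists>Y\<ge>Y0. u1 Y > 0"
  proof (rule ccontr)
    assume "\<not> ?thesis"
    hence np: "\<And>y. y \<ge> Y0 \<Longrightarrow> u1 y \<le> 0" by force
    have "u y \<le> u Y0" if "y \<ge> Y0" for y
    proof (rule DERIV_nonpos_imp_nonincreasing[of Y0 y u, OF that])
      fix x assume "Y0 \<le> x" "x \<le> y"
      thus "\<exists>l. (u has_real_derivative l) (at x) \<and> l \<le> 0"
        using du[of x] np[of x] Y0(1) by force
    qed
    moreover have "\<forall>\<^sub>F y in at_top. u y > u Y0"
      using ulimtop by (simp add: filterlim_at_top_dense)
    then obtain N where "\<And>y. y \<ge> N \<Longrightarrow> u y > u Y0" by (auto simp: eventually_at_top_linorder)
    ultimately show False using max.cobounded1 max.cobounded2 by (metis not_le)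
  qed
  then obtain Y where Y: "Y \<ge> Y0" "u1 Y > 0" by blast
  have Yy0: "Y > y0" using Y Y0 by linarith
  have p_pos: "u1 t > 0" if t: "t \<ge> Y" for t
  proof (rule ccontr)
    assume "\<not> u1 t > 0"
    hence t0: "u1 t \<le> 0" by simp
    define Z where "Z = {Y..t} \<inter> u1 -` {..0}"
    have cont: "continuous_on {Y..t} u1"
      using Yy0 by (intro continuous_at_imp_continuous_on ballI DERIV_isCont[OF du1]) auto
    have "closed Z" unfolding Z_def by (rule continuous_closed_preimage[OF cont]) auto
    moreover have "bounded Z" unfolding Z_def by (rule bounded_subset[of "{Y..t}"]) auto
    ultimately have "compact Z" by (simp add: compact_eq_bounded_closed)
    moreover have "t \<in> Z" using t t0 by (auto simp: Z_def)
    ultimately obtain z where z: "z \<in> Z" "\<And>s. s \<in> Z \<Longrightarrow> z \<le> s"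
      using compact_attains_inf[of Z] by blast
    have zI: "Y \<le> z" "z \<le> t" "u1 z \<le> 0" using z(1) by (auto simp: Z_def)
    have zY: "z > Y" using zI Y(2) by (cases "z = Y") auto
    have before: "u1 s > 0" if "Y \<le> s" "s < z" for s
    proof (rule ccontr)
      assume "\<not> u1 s > 0"
      hence "s \<in> Z" using that zI by (auto simp: Z_def)
      thus False using z(2)[of s] that by simp
    qed
    obtain xi where xi: "Y < xi" "xi < z" "u1 z - u1 Y = (z - Y) * u2 xi"
      using MVT2[of Y z u1 u2] zY Yy0 du1 by force
    have "u1 xi > 0" using before xi by simp
    moreover have "u xi > eta xi" using Y0 Y xi by simp
    ultimately have "u2 xi > 2*C*u1 xi" using key2[of xi] xi Yy0 by simp
    moreover have "2*C*u1 xi > 0" using C \<open>u1 xi > 0\<close> by simp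
    ultimately have "(z - Y) * u2 xi > 0" using zY by simp
    thus False using xi(3) zI Y(2) by linarith
  qed
  define c where "c = u1 Y * exp (- 2 * C * Y)"
  have c: "c > 0" using Y by (simp add: c_def)
  have p_ge: "u1 y \<ge> c * exp (2 * C * y)" if "y \<ge> Y" for y
  proof -
    have "u1 Y * exp (- 2 * C * Y) \<le> u1 y * exp (- 2 * C * y)"
    proof (rule DERIV_nonneg_imp_nondecreasing[OF that])
      fix x assume x: "Y \<le> x" "x \<le> y"
      have "u2 x > 2*C*u1 x" using key2[of x] p_pos[of x] x Y Y0 Yy0 by simp
      hence "(u2 x - 2*C*u1 x) * exp (- 2 * C * x) \<ge> 0" by simp
      moreover have "((\<lambda>y. u1 y * exp (- 2 * C * y)) has_real_derivative
              (u2 x - 2*C*u1 x) * exp (- 2 * C * x)) (at x)"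
        using x Yy0 by (auto intro!: derivative_eq_intros du1 simp: algebra_simps)
      ultimately show "\<exists>y. ((\<lambda>y. u1 y * exp (- 2 * C * y)) has_real_derivative y) (at x) \<and> 0 \<le> y"
        by blast
    qed
    hence "c \<le> u1 y * exp (- 2 * C * y)" by (simp add: c_def)
    hence "c * exp (2 * C * y) \<le> u1 y * exp (- 2 * C * y) * exp (2 * C * y)" by simp
    also have "\<dots> = u1 y" by (simp add: mult.assoc flip: exp_add)
    finally show ?thesis .
  qed
  define f where "f = (\<lambda>y. u y - c / (2 * C) * exp (2 * C * y))"
  have f_ge: "u y \<ge> f Y + c / (2 * C) * exp (2 * C * y)" if "y \<ge> Y" for y
  proof -
    have "f Y \<le> f y"
    proof (rule DERIV_nonneg_imp_nondecreasing[OF that])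
      fix x assume x: "Y \<le> x" "x \<le> y"
      have "((\<lambda>y. u y - c / (2 * C) * exp (2 * C * y)) has_real_derivative
              u1 x - c * exp (2 * C * x)) (at x)"
        using x Yy0 C by (auto intro!: derivative_eq_intros du simp: algebra_simps)
      moreover have "u1 x - c * exp (2 * C * x) \<ge> 0" using p_ge[of x] x by simp
      ultimately show "\<exists>y. (f has_real_derivative y) (at x) \<and> 0 \<le> y"
        unfolding f_def by blast
    qed
    thus ?thesis by (simp add: f_def)
  qed
  have lim1: "((\<lambda>y. u y * exp (- 2 * C * y)) \<longlongrightarrow> 1 * 0) at_top"
  proof (rule Lim_transform_eventually[OF tendsto_mult[OF ulim eexp]])
    show "\<forall>\<^sub>F y in at_top. u y / eta y * (eta y * exp (- 2 * C * y)) = u y * exp (- 2 * C * y)"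
      using eventually_gt_at_top[of y0] by eventually_elim (use epos in force)
  qed
  have e0: "((\<lambda>y. exp (- 2 * C * y)) \<longlongrightarrow> 0) at_top"
  proof -
    have "filterlim (\<lambda>y. 2 * C * y) at_top at_top"
      using C by (intro filterlim_tendsto_pos_mult_at_top[OF tendsto_const _ filterlim_ident]) simp
    hence "filterlim (\<lambda>y. - (2 * C * y)) at_bot at_top"
      using filterlim_uminus_at_bot_at_top filterlim_compose by blast
    hence "filterlim (\<lambda>y. - 2 * C * y) at_bot at_top" by simp
    thus ?thesis using exp_at_bot filterlim_compose by blast
  qed
  have lim2: "((\<lambda>y. f Y * exp (- 2 * C * y) + c / (2 * C)) \<longlongrightarrow> 0 + c / (2 * C)) at_top"
    by (intro tendsto_intros tendsto_mult_right_zero e0)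
  have "0 + c / (2 * C) \<le> 1 * 0"
  proof (rule tendsto_le[OF trivial_limit_at_top_linorder lim1 lim2])
    show "\<forall>\<^sub>F y in at_top. f Y * exp (- 2 * C * y) + c / (2 * C) \<le> u y * exp (- 2 * C * y)"
      using eventually_ge_at_top[of Y]
    proof eventually_elim
      case (elim y)
      have "(f Y + c / (2 * C) * exp (2 * C * y)) * exp (- 2 * C * y) \<le> u y * exp (- 2 * C * y)"
        using f_ge[OF elim] by simp
      thus ?case by (simp add: algebra_simps flip: exp_add)
    qed
  qed
  moreover have "c / (2 * C) > 0" using c C by simp
  ultimately show False by simp
qed

theorem theorem4p13:
  fixes Em :: ereal
    and r lam sigma a b rho del :: "real \<Rightarrow> real"
    and R :: real
    and y0 :: real
    and u u1 u2 :: "real \<Rightarrow> real"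
    and eta1 eta2 :: "real \<Rightarrow> real"
  defines "E \<equiv> stateE Em"
    and "eta \<equiv> eta_fun R r lam del"
    and "ta \<equiv> atilde_fun R a rho lam b"
    and "d \<equiv> d_fun R b rho"
  assumes Em: "Em \<noteq> \<infinity>"
    and lip: "loc_lipschitz_on E r" "loc_lipschitz_on E lam" "loc_lipschitz_on E sigma"
        "loc_lipschitz_on E a" "loc_lipschitz_on E b" "loc_lipschitz_on E rho"
        "loc_lipschitz_on E del"
    and sigma_pos: "\<forall>y\<in>E. sigma y > 0"
    and b_nz: "\<forall>y\<in>E. b y \<noteq> 0"
    and rho_range: "\<forall>y\<in>E. -1 \<le> rho y \<and> rho y \<le> 1"
    and R: "R > 0" "R \<noteq> 1"
    and y0: "y0 \<in> E"
    \<comment> \<open>u is a positive C^2 solution of the ODE on [y0, infinity)\<close>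
    and u_d1: "\<forall>y\<ge>y0. (u has_real_derivative u1 y) (at y within {y0..})"
    and u_d2: "\<forall>y\<ge>y0. (u1 has_real_derivative u2 y) (at y within {y0..})"
    and u_pos: "\<forall>y\<ge>y0. u y > 0"
    and u_ode: "\<forall>y\<ge>y0. 0 = (1/2) * (b y)\<^sup>2 * u2 y + ta y * u1 y + eta y * u y - (u y)\<^sup>2
                          - d y * (u1 y)\<^sup>2 / u y"
    and u_lim: "((\<lambda>y. u y / eta y) \<longlongrightarrow> 1) at_top"
    \<comment> \<open>eta is C^2 on [y0, infinity), positive, Psi eta <= 1 and bar a <= 0\<close>
    and eta_d1: "\<forall>y\<ge>y0. (eta has_real_derivative eta1 y) (at y within {y0..})"
    and eta_d2: "\<forall>y\<ge>y0. (eta1 has_real_derivative eta2 y) (at y within {y0..})"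
    and eta_C2: "continuous_on {y0..} eta2"
    and eta_pos: "\<forall>y\<ge>y0. eta y > 0"
    and Psi_eta: "\<forall>y\<ge>y0. Psi_op b ta d eta eta1 eta2 y \<le> 1"
    and abar: "\<forall>y\<ge>y0. ta y / eta y + ((b y)\<^sup>2 - 2 * d y) * eta1 y / (eta y)\<^sup>2 \<le> 0"
  shows "((\<forall>\<^sub>F y in at_top. u y > eta y) \<or> (\<forall>\<^sub>F y in at_top. u y \<le> eta y))
     \<and> ((\<exists>C>0. (\<forall>y\<ge>y0. ta y / (b y)\<^sup>2 \<le> - C)
              \<and> filterlim eta at_top at_top
              \<and> ((\<lambda>y. eta y * exp (- 2 * C * y)) \<longlongrightarrow> 0) at_top)
        \<longrightarrow> (\<forall>\<^sub>F y in at_top. u y \<le> eta y))"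

proof -
  have inE: "y \<in> E" if "y \<ge> y0" for y
    using y0 that unfolding E_def stateE_def by (auto intro: order_less_le_trans)
  have B: "(b y)^2 > 0" if "y \<ge> y0" for y using b_nz inE[OF that] by simp
  have D: "d y \<ge> 0" if "y \<ge> y0" for y
  proof -
    have "(rho y)^2 \<le> 1" using rho_range inE[OF that] by (simp add: abs_square_le_1 abs_le_iff)
    hence "(1 - (rho y)^2) * R \<ge> 0" using R by simp
    hence "(1 - (rho y)^2) * R + (rho y)^2 + 1 \<ge> 0" by (simp add: add_nonneg_nonneg)
    thus ?thesis unfolding d_def d_fun_def by simp
  qed
  have du: "\<And>y. y > y0 \<Longrightarrow> (u has_real_derivative u1 y) (at y)"
    using u_d1 deriv_at by (meson less_imp_le)
  have du1: "\<And>y. y > y0 \<Longrightarrow> (u1 has_real_derivative u2 y) (at y)"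
    using u_d2 deriv_at by (meson less_imp_le)
  have de: "\<And>y. y > y0 \<Longrightarrow> (eta has_real_derivative eta1 y) (at y)"
    using eta_d1 deriv_at by (meson less_imp_le)
  have de1: "\<And>y. y > y0 \<Longrightarrow> (eta1 has_real_derivative eta2 y) (at y)"
    using eta_d2 deriv_at by (meson less_imp_le)
  have epos: "\<And>y. y > y0 \<Longrightarrow> eta y > 0" using eta_pos by simp
  have key: "u2 y * eta y - u y * eta2 y > 0"
    if "y > y0" "u y > eta y" "u1 y * eta y - u y * eta1 y = 0" for y
  proof (rule alg1[OF that(2) epos[OF that(1)] B[of y]])
    show "y0 \<le> y" using that by simp
    show "0 = (1/2)*(b y)^2*u2 y + ta y*u1 y + eta y*u y - (u y)^2 - d y*(u1 y)^2/u y"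
      using u_ode that(1) by simp
    show "1 + ((1/2)*(b y)^2*eta2 y + ta y*eta1 y)/(eta y)^2 - d y*(eta1 y)^2/(eta y)^3 \<le> 1"
      using Psi_eta that(1) unfolding Psi_op_def by simp
    show "u1 y * eta y - u y * eta1 y = 0" by (fact that(3))
  qed
  have P1: "(\<forall>\<^sub>F y in at_top. u y > eta y) \<or> (\<forall>\<^sub>F y in at_top. u y \<le> eta y)"
    by (rule part1[OF du du1 de de1 epos key])
  moreover have "\<forall>\<^sub>F y in at_top. u y \<le> eta y"
    if C: "C > 0" "\<forall>y\<ge>y0. ta y / (b y)\<^sup>2 \<le> - C" "filterlim eta at_top at_top"
          "((\<lambda>y. eta y * exp (- 2 * C * y)) \<longlongrightarrow> 0) at_top" for C
  proof (rule ccontr)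
    assume nle: "\<not> (\<forall>\<^sub>F y in at_top. u y \<le> eta y)"
    hence ev: "\<forall>\<^sub>F y in at_top. u y > eta y" using P1 by blast
    have key2: "u2 y > 2*C*u1 y" if "y > y0" "u y > eta y" "u1 y \<ge> 0" for y
    proof (rule alg2[OF that(2) epos[OF that(1)] B[of y] D[of y] that(3)])
      show "y0 \<le> y" "y0 \<le> y" using that by simp_all
      show "ta y / (b y)^2 \<le> - C" using C(2) that(1) by simp
      show "0 = (1/2)*(b y)^2*u2 y + ta y*u1 y + eta y*u y - (u y)^2 - d y*(u1 y)^2/u y"
        using u_ode that(1) by simp
    qed
    show False by (rule part2[OF du du1 C(1) key2 ev C(3) u_lim C(4) epos])
  qed
  ultimately show ?thesis by blast
qed

end
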